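(* Consider two user types $k\in\{1,2\}$ (write $-k$ for the other type), with $N_k$ users of type $k$, individual arrival rate $\lambda_k$, departure rate $\mu_k$, and instantaneous utility of use $u_k(\tau)=\alpha_k-\beta_k/\tau$ ($\alpha_k,\beta_k>0$). Suppose the service provider uses CSMA with transmission probability $p\in(0,1)$, has no admission control (every arriving user is admitted), and offers the pricing policy $\mathbf P=(\phi,(p_s,0))$. Let $a_j=\lambda_j/(\lambda_j+\mu_j)$ and $x_j(\pi_{j,1})=\pi_{j,1}\,a_j\,\frac{p}{1-p}+1$ for $j=1,2$. When the other users play according to the profile $\pi=(\pi_1,\pi_2)$, $\pi_j=[\pi_{j,0},\pi_{j,1}]$, the expected utility of use and expected cost of a particular type-$k$ user playing $\pi_k'=[\pi_{k,0}',\pi_{k,1}']$ are $$U_k(\theta,\alpha,(\pi;\pi_k'))=\pi_{k,1}'\,\Delta T\,a_k\Big[\alpha_k-\frac{\beta_k}{p}\big(x_k(\pi_{k,1})\big)^{N_k-1}\big(x_{-k}(\pi_{-k,1})\big)^{N_{-k}}\Big]$$ and $C_k(\theta,\alpha,\mathbf P,(\pi;\pi_k'))=\pi_{k,1}'\,p_s$.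
   Context: Plan $0$ is the dummy plan $\phi$ (no subscription); plan $1$ charges subscription fee $p_s\ge0$ per billing period of length $\Delta T$ and zero per-unit charge. Each type-$k$ user independently chooses plan $1$ with probability $\pi_{k,1}$ (the particular user with probability $\pi_{k,1}'$), fixed thereafter; the realization gives $n_{k,1}$ type-$k$ users on plan $1$. Each plan-1 user alternates: while offline it arrives at the network after an exponential time of rate $\lambda_k$, and while online it departs after an exponential time of rate $\mu_k$, independently; $\mathbf X(\infty)$ denotes the steady-state system state, $x_{k,1}$ the number of online type-$k$ plan-1 users. Under the CSMA protocol (equivalent to slotted ALOHA with transmission probability $p$, normalized bandwidth $1$) an online user's throughput when $X=x_{1,1}+x_{2,1}$ users are online is $\tau(\mathbf x)=p(1-p)^{X-1}$. Definitions: $V_k^1(\mathbf n)=\Delta T\sum_{\mathbf x}\Pr(\mathbf X(\infty)=\mathbf x)\frac{x_{k,1}}{n_{k,1}}u_k(\tau(\mathbf x))$; $U_k(\theta,\alpha,(\pi;\pi_k'))=\pi_{k,1}'\sum_{\mathbf n:n_{k,1}\ge1}\Pr(\mathbf n\mid k,1)V_k^1(\mathbf n)$, where $\Pr(\mathbf n\mid k,1)$ is the probability of the realization $\mathbf n$ given that the particular user chose plan $1$ (other users choosing independently according to $\pi$); $C_k(\theta,\alpha,\mathbf P,(\pi;\pi_k'))=\pi_{k,1}'\big(p_s+\sum_{\mathbf n}\Pr(\mathbf n\mid k,1)\cdot 0\cdot B_k^1(\mathbf n)\big)$. *)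

theory Defs
  imports Complex_Main
begin

text \<open>User types are indexed by 1 and 2; the other type of k is 3 - k.
  Per-type parameters are functions nat => _ evaluated at 1 and 2.\<close>

definition other :: "nat \<Rightarrow> nat" where
  "other k = 3 - k"

definition binom_pmf :: "nat \<Rightarrow> real \<Rightarrow> nat \<Rightarrow> real" where
  "binom_pmf n q m = real (n choose m) * q ^ m * (1 - q) ^ (n - m)"

text \<open>Steady-state probability that a single plan-1 user of type j is online
  (stationary law of the two-state on/off chain with rates lambda_j, mu_j).\<close>
definition online_prob :: "(nat \<Rightarrow> real) \<Rightarrow> (nat \<Rightarrow> real) \<Rightarrow> nat \<Rightarrow> real" where
  "online_prob lam mu j = lam j / (lam j + mu j)"

text \<open>Steady-state distribution Pr(X(oo) = x) for the system state x = (x_{k,1}, x_{-k,1}),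
  given n_{k,1} = nk and n_{-k,1} = no plan-1 users, without admission control:
  every plan-1 user is independently online with probability online_prob.\<close>
definition steady_state ::
  "(nat \<Rightarrow> real) \<Rightarrow> (nat \<Rightarrow> real) \<Rightarrow> nat \<Rightarrow> nat \<Rightarrow> nat \<Rightarrow> nat \<Rightarrow> nat \<Rightarrow> real" where
  "steady_state lam mu k nk no xk xo =
     binom_pmf nk (online_prob lam mu k) xk * binom_pmf no (online_prob lam mu (other k)) xo"

text \<open>CSMA (slotted ALOHA) per-user throughput when X users are online.\<close>
definition tau :: "real \<Rightarrow> nat \<Rightarrow> real" where
  "tau p X = p * (1 - p) ^ (X - 1)"

definition util :: "(nat \<Rightarrow> real) \<Rightarrow> (nat \<Rightarrow> real) \<Rightarrow> nat \<Rightarrow> real \<Rightarrow> real" where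
  "util alpha beta k t = alpha k - beta k / t"

definition V1 ::
  "real \<Rightarrow> real \<Rightarrow> (nat \<Rightarrow> real) \<Rightarrow> (nat \<Rightarrow> real) \<Rightarrow> (nat \<Rightarrow> real) \<Rightarrow> (nat \<Rightarrow> real)
    \<Rightarrow> nat \<Rightarrow> nat \<Rightarrow> nat \<Rightarrow> real" where
  "V1 dT p lam mu alpha beta k nk no =
     dT * (\<Sum>xk\<in>{0..nk}. \<Sum>xo\<in>{0..no}.
             steady_state lam mu k nk no xk xo * (real xk / real nk)
             * util alpha beta k (tau p (xk + xo)))"

text \<open>Pr(n | k,1): the particular type-k user is on plan 1, the other N_k - 1 type-k users
  and the N_{-k} type-(-k) users choose plan 1 independently with prob. pi1 j.\<close>
definition cond_prob ::
  "(nat \<Rightarrow> nat) \<Rightarrow> (nat \<Rightarrow> real) \<Rightarrow> nat \<Rightarrow> nat \<Rightarrow> nat \<Rightarrow> real" where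
  "cond_prob N pi1 k nk no =
     (if 1 \<le> nk then binom_pmf (N k - 1) (pi1 k) (nk - 1) else 0)
     * binom_pmf (N (other k)) (pi1 (other k)) no"

definition U ::
  "(nat \<Rightarrow> nat) \<Rightarrow> real \<Rightarrow> real \<Rightarrow> (nat \<Rightarrow> real) \<Rightarrow> (nat \<Rightarrow> real) \<Rightarrow> (nat \<Rightarrow> real)
    \<Rightarrow> (nat \<Rightarrow> real) \<Rightarrow> (nat \<Rightarrow> real) \<Rightarrow> nat \<Rightarrow> real \<Rightarrow> real" where
  "U N dT p lam mu alpha beta pi1 k pi1' =
     pi1' * (\<Sum>nk\<in>{1..N k}. \<Sum>no\<in>{0..N (other k)}.
               cond_prob N pi1 k nk no * V1 dT p lam mu alpha beta k nk no)"

text \<open>Expected cost; B is the (arbitrary) usage-based bill B_k^1(n), charged at per-unit price 0.\<close>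
definition C ::
  "(nat \<Rightarrow> nat) \<Rightarrow> real \<Rightarrow> (nat \<Rightarrow> nat \<Rightarrow> real) \<Rightarrow> (nat \<Rightarrow> real) \<Rightarrow> nat \<Rightarrow> real \<Rightarrow> real" where
  "C N ps B pi1 k pi1' =
     pi1' * (ps + (\<Sum>nk\<in>{0..N k}. \<Sum>no\<in>{0..N (other k)}.
                     cond_prob N pi1 k nk no * 0 * B nk no))"

definition xfun :: "real \<Rightarrow> (nat \<Rightarrow> real) \<Rightarrow> (nat \<Rightarrow> real) \<Rightarrow> nat \<Rightarrow> real \<Rightarrow> real" where
  "xfun p lam mu j q = q * online_prob lam mu j * (p / (1 - p)) + 1"

end

theory Submission
  imports Defs
begin

lemma binom_sum: "(\<Sum>m\<in>{0..n}. binom_pmf n q m * z^m) = (q*z + (1-q))^n"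
  unfolding binom_pmf_def atLeast0AtMost binomial_ring
  by (rule sum.cong) (auto simp: power_mult_distrib mult_ac)

lemma binom_sum_d: "(\<Sum>m\<in>{0..n}. binom_pmf n q m * real m * z^(m-1)) = real n * q * (q*z + (1-q))^(n-1)"
proof (cases n)
  case 0 then show ?thesis by simp
next
  case (Suc n')
  have t: "binom_pmf (Suc n') q (Suc i) * real (Suc i) * z^(Suc i - 1) = real (Suc n') * q * (binom_pmf n' q i * z^i)" for i
  proof -
    have h: "real (Suc i) * real (Suc n' choose Suc i) = real (Suc n') * real (n' choose i)"
      using Suc_times_binomial[of i n'] by (metis of_nat_mult)
    have "binom_pmf (Suc n') q (Suc i) * real (Suc i) * z^(Suc i - 1) =
       (real (Suc i) * real (Suc n' choose Suc i)) * q * (q^i * (1-q)^(n'-i) * z^i)"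
      unfolding binom_pmf_def by (simp only: diff_Suc_Suc diff_Suc_1 power_Suc mult_ac)
    also have "\<dots> = (real (Suc n') * real (n' choose i)) * q * (q^i * (1-q)^(n'-i) * z^i)"
      by (simp only: h)
    also have "\<dots> = real (Suc n') * q * (binom_pmf n' q i * z^i)"
      unfolding binom_pmf_def by (simp only: mult_ac)
    finally show ?thesis .
  qed
  have "(\<Sum>m\<in>{0..n}. binom_pmf n q m * real m * z^(m-1)) = (\<Sum>i\<in>{0..n'}. real (Suc n') * q * (binom_pmf n' q i * z^i))"
    unfolding Suc sum.atLeast0_atMost_Suc_shift
    by (simp only: t mult_zero_right mult_zero_left of_nat_0 add_0_left comp_def)
  also have "\<dots> = real n * q * (q*z + (1-q))^(n-1)"
    by (simp add: sum_distrib_left[symmetric] binom_sum Suc)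
  finally show ?thesis .
qed

lemma V1_eq:
  assumes nk: "nk \<ge> 1" and p: "0 < p" "p < 1"
  shows "V1 dT p lam mu alpha beta k nk no = dT * online_prob lam mu k *
     (alpha k - beta k / p * (online_prob lam mu k * (1/(1-p)) + (1 - online_prob lam mu k))^(nk-1)
        * (online_prob lam mu (other k) * (1/(1-p)) + (1 - online_prob lam mu (other k)))^no)"
proof -
  define a where "a = online_prob lam mu k"
  define b where "b = online_prob lam mu (other k)"
  define r where "r = 1/(1-p)"
  have tm: "steady_state lam mu k nk no xk xo * (real xk / real nk) * util alpha beta k (tau p (xk + xo))
     = alpha k / real nk * ((binom_pmf nk a xk * real xk) * binom_pmf no b xo)
       - beta k / p / real nk * ((binom_pmf nk a xk * real xk * r^(xk-1)) * (binom_pmf no b xo * r^xo))" for xk xo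
  proof (cases "xk = 0")
    case True then show ?thesis by simp
  next
    case False
    have "tau p (xk + xo) = p * (1-p)^(xk-1) * (1-p)^xo"
      unfolding tau_def using False by (simp add: power_add[symmetric])
    then have "beta k / tau p (xk + xo) = beta k / p * r^(xk-1) * r^xo"
      using p by (simp add: r_def power_one_over field_simps)
    then show ?thesis
      unfolding steady_state_def util_def a_def[symmetric] b_def[symmetric]
      by (simp add: algebra_simps)
  qed
  have s1: "(\<Sum>xk\<in>{0..nk}. binom_pmf nk a xk * real xk) = real nk * a"
    using binom_sum_d[of nk a 1] by simp
  have s2: "(\<Sum>xo\<in>{0..no}. binom_pmf no b xo) = 1"
    using binom_sum[of no b 1] by simp
  have "V1 dT p lam mu alpha beta k nk no = dT * (alpha k / real nk *
        ((\<Sum>xk\<in>{0..nk}. binom_pmf nk a xk * real xk) * (\<Sum>xo\<in>{0..no}. binom_pmf no b xo))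
      - beta k / p / real nk * ((\<Sum>xk\<in>{0..nk}. binom_pmf nk a xk * real xk * r^(xk-1)) *
          (\<Sum>xo\<in>{0..no}. binom_pmf no b xo * r^xo)))"
    unfolding V1_def tm sum_product
    by (simp only: sum_distrib_left sum_subtractf[symmetric])
  also have "\<dots> = dT * a * (alpha k - beta k / p * (a*r + (1-a))^(nk-1) * (b*r + (1-b))^no)"
    unfolding s1 s2 binom_sum binom_sum_d using nk by (simp add: field_simps)
  finally show ?thesis by (simp add: a_def b_def r_def)
qed


lemma xfun_eq: fixes p :: real assumes "p < 1" shows
  "q * (a * (1/(1-p)) + (1 - a)) + (1 - q) = q * a * (p / (1-p)) + 1"
proof -
  have "1 - p \<noteq> 0" using assms by simp
  then show ?thesis by (simp add: field_simps)
qed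

theorem lemma1:
  fixes N :: "nat \<Rightarrow> nat"
    and lam mu alpha beta pi1 :: "nat \<Rightarrow> real"
    and dT p ps pi1' :: real
    and B :: "nat \<Rightarrow> nat \<Rightarrow> real"
    and k :: nat
  assumes k: "k \<in> {1, 2}"
    and N: "\<forall>j\<in>{1, 2}. N j \<ge> 1"
    and lam: "\<forall>j\<in>{1, 2}. lam j > 0"
    and mu: "\<forall>j\<in>{1, 2}. mu j > 0"
    and alpha: "\<forall>j\<in>{1, 2}. alpha j > 0"
    and beta: "\<forall>j\<in>{1, 2}. beta j > 0"
    and pi1: "\<forall>j\<in>{1, 2}. 0 \<le> pi1 j \<and> pi1 j \<le> 1"
    and pi1': "0 \<le> pi1' \<and> pi1' \<le> 1"
    and p: "0 < p \<and> p < 1"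
    and ps: "ps \<ge> 0"
    and dT: "dT > 0"
  shows "(U N dT p lam mu alpha beta pi1 k pi1' =
           pi1' * dT * online_prob lam mu k *
           (alpha k - beta k / p * (xfun p lam mu k (pi1 k)) ^ (N k - 1)
                                  * (xfun p lam mu (other k) (pi1 (other k))) ^ N (other k)))
         \<and> C N ps B pi1 k pi1' = pi1' * ps"
proof
  show "C N ps B pi1 k pi1' = pi1' * ps" unfolding C_def by simp
next
  define a where "a = online_prob lam mu k"
  define b where "b = online_prob lam mu (other k)"
  define r where "r = 1/(1-p)"
  define yk where "yk = a*r + (1-a)"
  define yo where "yo = b*r + (1-b)"
  define M where "M = N k - 1"
  define No where "No = N (other k)"
  define qk where "qk = pi1 k"
  define qo where "qo = pi1 (other k)"
  have NM: "N k = Suc M" using N k unfolding M_def by auto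
  have NM1: "{1..N k} = {Suc 0..Suc M}" using NM by simp
  have V: "V1 dT p lam mu alpha beta k nk no = dT * a * (alpha k - beta k / p * yk^(nk-1) * yo^no)"
    if "nk \<ge> 1" for nk no
    using V1_eq[OF that, of p dT lam mu alpha beta k no] p
    unfolding a_def b_def r_def yk_def yo_def by simp
  have V': "V1 dT p lam mu alpha beta k (Suc j) no = dT * a * (alpha k - beta k / p * yk^j * yo^no)" for j no
    using V[of "Suc j" no] by simp
  have tm: "cond_prob N pi1 k (Suc j) no * V1 dT p lam mu alpha beta k (Suc j) no =
     dT * a * alpha k * (binom_pmf M qk j * binom_pmf No qo no)
     - dT * a * beta k / p * ((binom_pmf M qk j * yk^j) * (binom_pmf No qo no * yo^no))" for j no
    unfolding cond_prob_def V' M_def[symmetric] No_def[symmetric]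
      qk_def[symmetric] qo_def[symmetric]
    by (simp add: algebra_simps)
  have "U N dT p lam mu alpha beta pi1 k pi1' = pi1' * (\<Sum>j\<in>{0..M}. \<Sum>no\<in>{0..No}.
     dT * a * alpha k * (binom_pmf M qk j * binom_pmf No qo no)
     - dT * a * beta k / p * ((binom_pmf M qk j * yk^j) * (binom_pmf No qo no * yo^no)))"
    unfolding U_def NM1 sum.atLeast_Suc_atMost_Suc_shift No_def[symmetric]
    by (simp add: tm)
  also have "\<dots> = pi1' * (dT * a * alpha k * ((\<Sum>j\<in>{0..M}. binom_pmf M qk j) * (\<Sum>no\<in>{0..No}. binom_pmf No qo no))
     - dT * a * beta k / p * ((\<Sum>j\<in>{0..M}. binom_pmf M qk j * yk^j) * (\<Sum>no\<in>{0..No}. binom_pmf No qo no * yo^no)))"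
    unfolding sum_product by (simp only: sum_distrib_left sum_subtractf[symmetric])
  also have "\<dots> = pi1' * (dT * a * alpha k
     - dT * a * beta k / p * ((qk*yk + (1-qk))^M * (qo*yo + (1-qo))^No))"
    using binom_sum[of M qk 1] binom_sum[of No qo 1] binom_sum[of M qk yk] binom_sum[of No qo yo]
    by simp
  also have "\<dots> = pi1' * dT * online_prob lam mu k *
           (alpha k - beta k / p * (xfun p lam mu k (pi1 k)) ^ (N k - 1)
                                  * (xfun p lam mu (other k) (pi1 (other k))) ^ N (other k))"
    unfolding xfun_def M_def[symmetric] No_def[symmetric] qk_def[symmetric] qo_def[symmetric]
      a_def[symmetric] b_def[symmetric] yk_def yo_def r_def xfun_eq[OF conjunct2[OF p]]
    by (simp add: algebra_simps)
  finally show "U N dT p lam mu alpha beta pi1 k pi1' = pi1' * dT * online_prob lam mu k *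
           (alpha k - beta k / p * (xfun p lam mu k (pi1 k)) ^ (N k - 1)
                                  * (xfun p lam mu (other k) (pi1 (other k))) ^ N (other k))" .
qed

end
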